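(* Let $A\in\mathbb{R}^{m\times n}$, $b\in\mathbb{R}^m$, $v\in\mathbb{R}^n$ with $v\ge0$, $\beta>0$, $\lambda>0$ and $\bar x\in\mathbb{R}^n$. Define $S_\lambda(z,v)=\operatorname{sign}(z)\odot\max\{|z|-\lambda v,0\}$ for $z\in\mathbb{R}^n$ and $$\Phi(y)=b^Ty+\frac{1}{2\beta}\|y\|^2+\frac{1}{2\lambda}\|S_\lambda(\bar x-\lambda A^Ty,v)\|^2,\qquad y\in\mathbb{R}^m.$$ Then: (a) $\Phi$ is a continuously differentiable convex function with $\nabla\Phi(y)=b+\beta^{-1}y-AS_\lambda(\bar x-\lambda A^Ty,v)$ for all $y\in\mathbb{R}^m$; (b) if $\hat y$ satisfies $\nabla\Phi(\hat y)=0$, then $(\hat u,\hat x)$ with $\hat u=-\beta^{-1}\hat y$ and $\hat x=S_\lambda(\bar x-\lambda A^T\hat y,v)$ is the unique optimal solution of $$\min_{u\in\mathbb{R}^m,x\in\mathbb{R}^n}\Big\{\langle v,|x|\rangle+\frac{\beta}{2}\|u\|^2+\frac{1}{2\lambda}\|x-\bar x\|^2:\ Ax+u=b\Big\};$$ (c) $\nabla\Phi$ is Lipschitz continuous and strongly semismooth; (d) for every $y\in\mathbb{R}^m$, with $z=\bar x-\lambda A^Ty$ and $H(x,v):=\operatorname{sign}(x)\odot\max\{|x|-\lambda v,0\}$, the Clarke generalized Jacobian of $\nabla\Phi$ satisfies $$\partial(\nabla\Phi)(y)\subseteq \beta^{-1}I+\lambda A\,\partial_x H(z,v)\,A^T,$$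 where $\partial_xH(z,v)$ is the Clarke generalized Jacobian of $H(\cdot,v)$ at $z$.
   Context: $\odot$ is the componentwise product, $\operatorname{sign}$, $|\cdot|$ and $\max$ act componentwise, $\|\cdot\|$ is the Euclidean norm, $I$ is the $m\times m$ identity. The right-hand side in (d) denotes the set $\{\beta^{-1}I+\lambda ADA^T: D\in\partial_xH(z,v)\}$. *)

theory Defs
  imports "HOL-Analysis.Analysis"
begin

definition soft_thr :: "real \<Rightarrow> real^'n \<Rightarrow> real^'n \<Rightarrow> real^'n" where
  "soft_thr lam z v = (\<chi> i. sgn (z $ i) * max (\<bar>z $ i\<bar> - lam * v $ i) 0)"

definition vabs :: "real^'n \<Rightarrow> real^'n" where
  "vabs x = (\<chi> i. \<bar>x $ i\<bar>)"

definition Phi :: "real^'n^'m \<Rightarrow> real^'m \<Rightarrow> real^'n \<Rightarrow> real \<Rightarrow> real \<Rightarrow> real^'n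
                   \<Rightarrow> real^'m \<Rightarrow> real" where
  "Phi A b v \<beta> lam xbar y =
     b \<bullet> y + (1 / (2 * \<beta>)) * (norm y)\<^sup>2
     + (1 / (2 * lam)) * (norm (soft_thr lam (xbar - lam *\<^sub>R (transpose A *v y)) v))\<^sup>2"

definition gradPhi :: "real^'n^'m \<Rightarrow> real^'m \<Rightarrow> real^'n \<Rightarrow> real \<Rightarrow> real \<Rightarrow> real^'n
                   \<Rightarrow> real^'m \<Rightarrow> real^'m" where
  "gradPhi A b v \<beta> lam xbar y =
     b + (1 / \<beta>) *\<^sub>R y - A *v soft_thr lam (xbar - lam *\<^sub>R (transpose A *v y)) v"

definition primal_obj :: "real^'n \<Rightarrow> real \<Rightarrow> real \<Rightarrow> real^'n \<Rightarrow> real^'m \<Rightarrow> real^'n \<Rightarrow> real" where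
  "primal_obj v \<beta> lam xbar u x =
     v \<bullet> vabs x + (\<beta> / 2) * (norm u)\<^sup>2 + (1 / (2 * lam)) * (norm (x - xbar))\<^sup>2"

definition bouligand_jac :: "(real^'a \<Rightarrow> real^'b) \<Rightarrow> real^'a \<Rightarrow> (real^'a^'b) set" where
  "bouligand_jac F x = {V. \<exists>s. (\<forall>k. F differentiable (at (s k))) \<and> s \<longlonglongrightarrow> x \<and>
       (\<lambda>k. matrix (frechet_derivative F (at (s k)))) \<longlonglongrightarrow> V}"

definition clarke_jac :: "(real^'a \<Rightarrow> real^'b) \<Rightarrow> real^'a \<Rightarrow> (real^'a^'b) set" where
  "clarke_jac F x = convex hull (bouligand_jac F x)"

definition strongly_semismooth_at :: "(real^'a \<Rightarrow> real^'b) \<Rightarrow> real^'a \<Rightarrow> bool" where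
  "strongly_semismooth_at F x \<longleftrightarrow>
     (\<exists>e>0. \<exists>L. lipschitz_on L (ball x e) F) \<and>
     (\<forall>d. \<exists>l. ((\<lambda>t. (1 / t) *\<^sub>R (F (x + t *\<^sub>R d) - F x)) \<longlongrightarrow> l) (at_right 0)) \<and>
     (\<exists>C \<delta>. \<delta> > 0 \<and> (\<forall>h. 0 < norm h \<and> norm h < \<delta> \<longrightarrow>
         (\<forall>V \<in> clarke_jac F (x + h). norm (F (x + h) - F x - V *v h) \<le> C * (norm h)\<^sup>2)))"

definition strongly_semismooth :: "(real^'a \<Rightarrow> real^'b) \<Rightarrow> bool" where
  "strongly_semismooth F \<longleftrightarrow> (\<forall>x. strongly_semismooth_at F x)"

end

theory Submission
  imports Defs
begin


lemma soft_nth: "soft_thr lam z v $ i = sgn (z$i) * max (\<bar>z$i\<bar> - lam * v$i) 0"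
  by (simp add: soft_thr_def)

lemma mv_inner: fixes A :: "real^'n^'m" shows "(A *v x) \<bullet> y = x \<bullet> (transpose A *v y)"
  by (metis dot_lmul_matrix inner_commute transpose_matrix_vector)

lemma mat_bound: fixes M :: "real^'n^'m" shows "\<exists>B>0. \<forall>x. norm (M *v x) \<le> B * norm x"
  using bounded_linear.pos_bounded[OF matrix_vector_mul_bounded_linear[of M]]
  by (auto simp: mult.commute)

lemma norm_sq_vec: fixes x :: "real^'n" shows "(norm x)^2 = (\<Sum>i\<in>UNIV. (x$i)^2)"
  unfolding power2_norm_eq_inner inner_vec_def by (simp add: power2_eq_square)

lemma norm_le_compwise: fixes x y :: "real^'n" assumes "\<And>i. \<bar>x$i\<bar> \<le> \<bar>y$i\<bar>" shows "norm x \<le> norm y"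
  unfolding norm_vec_def by (rule L2_set_mono) (use assms in auto)


declare transpose_matrix_vector[simp del]

definition st :: "real \<Rightarrow> real \<Rightarrow> real" where "st c t = sgn t * max (\<bar>t\<bar> - c) 0"

lemma soft_st: "soft_thr lam z v $ i = st (lam * v$i) (z $ i)"
  by (simp add: soft_thr_def st_def)

lemma st_lip: "c \<ge> 0 \<Longrightarrow> \<bar>st c a - st c b\<bar> \<le> \<bar>a - b\<bar>"
  unfolding st_def by (auto simp: sgn_if abs_if max_def split: if_splits)

lemma st_cases: "c \<ge> 0 \<Longrightarrow> (t > c \<and> st c t = t - c) \<or> (t < -c \<and> st c t = t + c) \<or> (-c \<le> t \<and> t \<le> c \<and> st c t = 0)"
  unfolding st_def by (auto simp: sgn_if abs_if max_def)

lemma quad_aux: fixes a b c p q :: real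
  assumes c: "c \<ge> 0"
   and hp: "(a > c \<and> p = a - c) \<or> (a < -c \<and> p = a + c) \<or> (-c \<le> a \<and> a \<le> c \<and> p = 0)"
   and hq: "(b > c \<and> q = b - c) \<or> (b < -c \<and> q = b + c) \<or> (-c \<le> b \<and> b \<le> c \<and> q = 0)"
  shows "0 \<le> q^2 - p^2 - 2 * p * (b - a) \<and> q^2 - p^2 - 2 * p * (b - a) \<le> (b-a)^2"
  using hp hq
proof (elim disjE conjE)
  assume h: "c < a" "p = a - c" "c < b" "q = b - c"
  have "q^2 - p^2 - 2 * p * (b - a) = (b-a)^2" unfolding h(2,4) by (simp add: power2_eq_square algebra_simps)
  then show ?thesis by simp
next
  assume h: "c < a" "p = a - c" "b < -c" "q = b + c"
  have e1: "q^2 - p^2 - 2 * p * (b - a) = (b-a+2*c)^2 + 4*c*(a-c)" "q^2 - p^2 - 2 * p * (b - a) = (b-a)^2 + 4*c*b"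
    unfolding h by (simp_all add: power2_eq_square algebra_simps)
  have "0 \<le> c*(a-c)" "c * b \<le> 0" "0 \<le> (b-a+2*c)^2" using h c by (simp_all add: mult_nonneg_nonpos)
  then show ?thesis using e1 by linarith
next
  assume h: "c < a" "p = a - c" "- c \<le> b" "b \<le> c" "q = 0"
  have e1: "q^2 - p^2 - 2 * p * (b - a) = (a-c)*(a+c-2*b)" "(b-a)^2 - (q^2 - p^2 - 2 * p * (b - a)) = (b-c)^2"
    unfolding h by (simp_all add: power2_eq_square algebra_simps)
  have "0 \<le> (a-c)*(a+c-2*b)" using h by simp
  moreover have "0 \<le> (b-c)^2" "0 \<le> (b+c)^2" by simp_all
  ultimately show ?thesis using e1 by linarith
next
  assume h: "a < -c" "p = a + c" "c < b" "q = b - c"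
  have e1: "q^2 - p^2 - 2 * p * (b - a) = (b-a-2*c)^2 - 4*c*(a+c)" "q^2 - p^2 - 2 * p * (b - a) = (b-a)^2 - 4*c*b"
    unfolding h by (simp_all add: power2_eq_square algebra_simps)
  have "c*(a+c) \<le> 0" "0 \<le> c * b" "0 \<le> (b-a-2*c)^2" using h c by (simp_all add: mult_nonneg_nonpos)
  then show ?thesis using e1 by linarith
next
  assume h: "- c \<le> a" "a \<le> c" "p = 0" "c < b" "q = b - c"
  have "(b-c)^2 \<le> (b-a)^2" using h by (intro power_mono) auto
  then show ?thesis using h by simp
next
  assume h: "a < - c" "p = a + c" "b < -c" "q = b + c"
  have "q^2 - p^2 - 2 * p * (b - a) = (b-a)^2" unfolding h(2,4) by (simp add: power2_eq_square algebra_simps)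
  then show ?thesis by simp
next
  assume h: "a < -c" "p = a + c" "- c \<le> b" "b \<le> c" "q = 0"
  have e1: "q^2 - p^2 - 2 * p * (b - a) = (-(a+c))*(2*b - a + c)" "(b-a)^2 - (q^2 - p^2 - 2 * p * (b - a)) = (b+c)^2"
    unfolding h by (simp_all add: power2_eq_square algebra_simps)
  have "0 \<le> (-(a+c))*(2*b-a+c)" using h by simp
  moreover have "0 \<le> (b-c)^2" "0 \<le> (b+c)^2" by simp_all
  ultimately show ?thesis using e1 by linarith
next
  assume h: "- c \<le> a" "a \<le> c" "p = 0" "b < -c" "q = b + c"
  have "(-(b+c))^2 \<le> (a-b)^2" using h by (intro power_mono) auto
  then show ?thesis using h by (simp add: power2_commute add.commute)
next
  assume "- c \<le> a" "a \<le> c" "p = 0" "- c \<le> b" "b \<le> c" "q = 0" then show ?thesis by simp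
qed

lemma st_quad: "c \<ge> 0 \<Longrightarrow> 0 \<le> (st c b)^2 - (st c a)^2 - 2 * st c a * (b - a) \<and> (st c b)^2 - (st c a)^2 - 2 * st c a * (b - a) \<le> (b-a)^2"
  by (rule quad_aux[OF _ st_cases st_cases])

context
  fixes A :: "real^'n^'m" and b :: "real^'m" and v :: "real^'n" and \<beta> lam :: real and xbar :: "real^'n"
  assumes vnn: "\<forall>i. v$i \<ge> 0" and bp: "\<beta> > 0" and lp: "lam > 0"
begin

lemma cnn: "lam * v$i \<ge> 0" using vnn lp by simp

lemma S_lip: "norm (soft_thr lam a v - soft_thr lam a' v) \<le> norm (a - a')"
  by (rule norm_le_compwise) (simp add: soft_st st_lip[OF cnn])

lemma F_diff: "gradPhi A b v \<beta> lam xbar y - gradPhi A b v \<beta> lam xbar y' =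
   (1/\<beta>) *\<^sub>R (y - y') - A *v (soft_thr lam (xbar - lam *\<^sub>R (transpose A *v y)) v - soft_thr lam (xbar - lam *\<^sub>R (transpose A *v y')) v)"
  by (simp add: gradPhi_def algebra_simps)

lemma F_lip: "\<exists>L. lipschitz_on L UNIV (gradPhi A b v \<beta> lam xbar)"
proof -
  obtain BA where BA: "BA > 0" "\<And>x. norm (A *v x) \<le> BA * norm x" using mat_bound by blast
  obtain BT where BT: "BT > 0" "\<And>x. norm (transpose A *v x) \<le> BT * norm x" using mat_bound by blast
  let ?L = "1/\<beta> + BA * lam * BT"
  have "dist (gradPhi A b v \<beta> lam xbar y) (gradPhi A b v \<beta> lam xbar y') \<le> ?L * dist y y'" for y y'
  proof -
    let ?z = "xbar - lam *\<^sub>R (transpose A *v y)" and ?z' = "xbar - lam *\<^sub>R (transpose A *v y')"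
    have "norm (A *v (soft_thr lam ?z v - soft_thr lam ?z' v)) \<le> BA * norm (soft_thr lam ?z v - soft_thr lam ?z' v)" by (rule BA)
    also have "\<dots> \<le> BA * norm (?z - ?z')" by (rule mult_left_mono[OF S_lip]) (use BA in simp)
    also have "?z - ?z' = - lam *\<^sub>R (transpose A *v (y - y'))" by (simp add: algebra_simps)
    also have "BA * norm \<dots> \<le> BA * (lam * (BT * norm (y - y')))" using BA BT(2)[of "y-y'"] lp by (simp add: mult_left_mono)
    finally have 1: "norm (A *v (soft_thr lam ?z v - soft_thr lam ?z' v)) \<le> BA * lam * BT * norm (y - y')" by (simp add: ac_simps)
    have "dist (gradPhi A b v \<beta> lam xbar y) (gradPhi A b v \<beta> lam xbar y') = norm ((1/\<beta>) *\<^sub>R (y - y') - A *v (soft_thr lam ?z v - soft_thr lam ?z' v))"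
      by (simp add: dist_norm F_diff)
    also have "\<dots> \<le> norm ((1/\<beta>) *\<^sub>R (y - y')) + norm (A *v (soft_thr lam ?z v - soft_thr lam ?z' v))" by (rule norm_triangle_ineq4)
    also have "\<dots> \<le> (1/\<beta>) * norm (y - y') + BA * lam * BT * norm (y - y')" using 1 bp by simp
    finally show ?thesis by (simp add: dist_norm algebra_simps)
  qed
  moreover have "0 \<le> ?L" using bp BA BT lp by simp
  ultimately show ?thesis unfolding lipschitz_on_def by blast
qed

lemma grad_ineq: "\<exists>K\<ge>0. \<forall>y h. 0 \<le> Phi A b v \<beta> lam xbar (y + h) - Phi A b v \<beta> lam xbar y - gradPhi A b v \<beta> lam xbar y \<bullet> h
    \<and> Phi A b v \<beta> lam xbar (y + h) - Phi A b v \<beta> lam xbar y - gradPhi A b v \<beta> lam xbar y \<bullet> h \<le> K * (norm h)^2"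
proof -
  obtain BT where BT: "BT > 0" "\<And>x. norm (transpose A *v x) \<le> BT * norm x" using mat_bound by blast
  let ?K = "1/(2*\<beta>) + lam * BT^2 / 2"
  have "0 \<le> ?K" using bp lp BT by simp
  moreover have "0 \<le> Phi A b v \<beta> lam xbar (y + h) - Phi A b v \<beta> lam xbar y - gradPhi A b v \<beta> lam xbar y \<bullet> h
    \<and> Phi A b v \<beta> lam xbar (y + h) - Phi A b v \<beta> lam xbar y - gradPhi A b v \<beta> lam xbar y \<bullet> h \<le> ?K * (norm h)^2" for y h
  proof -
    define z where "z = xbar - lam *\<^sub>R (transpose A *v y)"
    define z' where "z' = xbar - lam *\<^sub>R (transpose A *v (y + h))"
    have zz: "z' - z = - lam *\<^sub>R (transpose A *v h)" unfolding z_def z'_def by (simp add: algebra_simps)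
    define Q where "Q = (norm (soft_thr lam z' v))^2 - (norm (soft_thr lam z v))^2 - 2 * (soft_thr lam z v \<bullet> (z' - z))"
    have Qs: "Q = (\<Sum>i\<in>UNIV. (st (lam * v$i) (z' $ i))^2 - (st (lam * v$i) (z $ i))^2 - 2 * st (lam * v$i) (z $ i) * (z' $ i - z $ i))"
      unfolding Q_def norm_sq_vec inner_vec_def by (simp add: soft_st sum_subtractf sum_distrib_left ac_simps)
    have Q0: "0 \<le> Q" unfolding Qs by (rule sum_nonneg) (use st_quad[OF cnn] in blast)
    have "Q \<le> (\<Sum>i\<in>UNIV. (z' $ i - z $ i)^2)" unfolding Qs by (rule sum_mono) (use st_quad[OF cnn] in blast)
    also have "\<dots> = (norm (z' - z))^2" by (simp add: norm_sq_vec)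
    also have "\<dots> = lam^2 * (norm (transpose A *v h))^2" unfolding zz using lp by (simp add: power_mult_distrib)
    also have "\<dots> \<le> lam^2 * (BT * norm h)^2" using BT(2)[of h] by (intro mult_left_mono power_mono) auto
    finally have Q1: "Q \<le> lam^2 * (BT * norm h)^2" .
    have inn: "(A *v soft_thr lam z v) \<bullet> h = - (1/lam) * (soft_thr lam z v \<bullet> (z' - z))"
      unfolding zz mv_inner using lp by (simp add: inner_minus_right)
    have inn': "(A *v soft_thr lam z v) \<bullet> h = (soft_thr lam z v \<bullet> z - soft_thr lam z v \<bullet> z') / lam"
      unfolding inn using lp by (simp add: inner_diff_right field_simps)
    have eq: "Phi A b v \<beta> lam xbar (y + h) - Phi A b v \<beta> lam xbar y - gradPhi A b v \<beta> lam xbar y \<bullet> h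
       = (norm h)^2 / (2*\<beta>) + Q / (2*lam)"
      unfolding Phi_def gradPhi_def z_def[symmetric] z'_def[symmetric] Q_def
      using bp lp inner_commute[of h y]
      by (simp add: inn' inner_simps power2_norm_eq_inner field_simps)
    have q2: "Q / (2*lam) \<le> lam * BT^2 / 2 * (norm h)^2"
    proof -
      have "Q/(2*lam) \<le> lam^2 * (BT * norm h)^2 / (2*lam)" using Q1 lp by (simp add: divide_right_mono)
      also have "\<dots> = lam*BT^2/2*(norm h)^2" using lp by (simp add: power2_eq_square field_simps)
      finally show ?thesis .
    qed
    have q3: "0 \<le> Q/(2*lam)" "0 \<le> (norm h)^2/(2*\<beta>)" using Q0 lp bp by simp_all
    have "?K * (norm h)^2 = (norm h)^2/(2*\<beta>) + lam*BT^2/2*(norm h)^2" by (simp add: field_simps)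
    then show ?thesis unfolding eq using q2 q3 by linarith
  qed
  ultimately show ?thesis by blast
qed

lemma Phi_deriv: "(Phi A b v \<beta> lam xbar has_derivative (\<lambda>h. gradPhi A b v \<beta> lam xbar y \<bullet> h)) (at y)"
proof -
  obtain K where K: "K \<ge> 0" "\<And>y h. 0 \<le> Phi A b v \<beta> lam xbar (y + h) - Phi A b v \<beta> lam xbar y - gradPhi A b v \<beta> lam xbar y \<bullet> h"
    "\<And>y h. Phi A b v \<beta> lam xbar (y + h) - Phi A b v \<beta> lam xbar y - gradPhi A b v \<beta> lam xbar y \<bullet> h \<le> K * (norm h)^2"
    using grad_ineq by blast
  show ?thesis unfolding has_derivative_at_alt
  proof (intro conjI allI impI)
    show "bounded_linear (\<lambda>h. gradPhi A b v \<beta> lam xbar y \<bullet> h)" by (rule bounded_linear_inner_right)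
    fix e :: real assume e: "e > 0"
    show "\<exists>d>0. \<forall>y'. norm (y' - y) < d \<longrightarrow> norm (Phi A b v \<beta> lam xbar y' - Phi A b v \<beta> lam xbar y - gradPhi A b v \<beta> lam xbar y \<bullet> (y' - y)) \<le> e * norm (y' - y)"
    proof (intro exI[of _ "e / (K+1)"] conjI allI impI)
      show "e / (K+1) > 0" using e K by simp
      fix y' :: "real^'m" assume d: "norm (y' - y) < e / (K+1)"
      define h where "h = y' - y"
      have y': "y' = y + h" unfolding h_def by simp
      have "K * (norm h)^2 \<le> (K+1) * norm h * norm h" by (simp add: power2_eq_square distrib_right)
      also have "\<dots> \<le> (K+1) * (e/(K+1)) * norm h" using d K unfolding h_def[symmetric]
        by (intro mult_right_mono mult_left_mono) auto
      also have "\<dots> = e * norm h" using K by simp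
      finally have "K * (norm h)^2 \<le> e * norm h" .
      then show "norm (Phi A b v \<beta> lam xbar y' - Phi A b v \<beta> lam xbar y - gradPhi A b v \<beta> lam xbar y \<bullet> (y' - y)) \<le> e * norm (y' - y)"
        unfolding y' using K(2)[of y h] K(3)[of y h] by (simp add: h_def)
    qed
  qed
qed

lemma Phi_convex: "convex_on UNIV (Phi A b v \<beta> lam xbar)"
proof -
  obtain K where K: "\<And>y h. 0 \<le> Phi A b v \<beta> lam xbar (y + h) - Phi A b v \<beta> lam xbar y - gradPhi A b v \<beta> lam xbar y \<bullet> h"
    using grad_ineq by blast
  show ?thesis
  proof (rule convex_onI)
    fix t :: real and x y :: "real^'m" assume t: "0 < t" "t < 1"
    define p where "p = (1 - t) *\<^sub>R x + t *\<^sub>R y"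
    have 1: "x = p + t *\<^sub>R (x - y)" "y = p + (1 - t) *\<^sub>R (y - x)" unfolding p_def by (simp_all add: algebra_simps)
    have a: "Phi A b v \<beta> lam xbar p + t * (gradPhi A b v \<beta> lam xbar p \<bullet> (x - y)) \<le> Phi A b v \<beta> lam xbar x"
      using K[of p "t *\<^sub>R (x - y)"] 1(1) by simp
    have c: "Phi A b v \<beta> lam xbar p - (1 - t) * (gradPhi A b v \<beta> lam xbar p \<bullet> (x - y)) \<le> Phi A b v \<beta> lam xbar y"
      using K[of p "(1 - t) *\<^sub>R (y - x)"] 1(2) by (simp add: inner_diff_right algebra_simps)
    have "(1 - t) * (Phi A b v \<beta> lam xbar p + t * (gradPhi A b v \<beta> lam xbar p \<bullet> (x - y))) + t * (Phi A b v \<beta> lam xbar p - (1 - t) * (gradPhi A b v \<beta> lam xbar p \<bullet> (x - y)))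
      \<le> (1 - t) * Phi A b v \<beta> lam xbar x + t * Phi A b v \<beta> lam xbar y"
      using a c t by (intro add_mono mult_left_mono) auto
    then show "Phi A b v \<beta> lam xbar ((1 - t) *\<^sub>R x + t *\<^sub>R y) \<le> (1 - t) * Phi A b v \<beta> lam xbar x + t * Phi A b v \<beta> lam xbar y"
      unfolding p_def[symmetric] by (simp add: algebra_simps)
  qed simp
qed

end


lemma prox_aux: fixes c w t :: real assumes c: "c \<ge> 0"
  shows "(w - st c w) * (t - st c w) \<le> c * \<bar>t\<bar> - c * \<bar>st c w\<bar>"
proof -
  consider "w > c" "st c w = w - c" | "w < -c" "st c w = w + c" | "-c \<le> w" "w \<le> c" "st c w = 0"
    using st_cases[OF c, of w] by blast
  then show ?thesis
  proof cases
    case 1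
    have "c * t \<le> c * \<bar>t\<bar>" using c by (simp add: mult_left_mono)
    moreover have "\<bar>w - c\<bar> = w - c" using 1 by simp
    ultimately show ?thesis unfolding 1(2) by (simp add: algebra_simps)
  next
    case 2 
    have "- (c * t) \<le> c * \<bar>t\<bar>" using c by (metis abs_ge_minus_self minus_mult_right mult_left_mono)
    moreover have "\<bar>w + c\<bar> = - (w + c)" using 2 by simp
    ultimately show ?thesis unfolding 2(2) by (simp add: algebra_simps)
  next
    case 3
    have "w * t \<le> \<bar>w\<bar> * \<bar>t\<bar>" by (metis abs_ge_self abs_mult)
    also have "\<dots> \<le> c * \<bar>t\<bar>" using 3 by (intro mult_right_mono) auto
    finally show ?thesis using 3 by simp
  qed
qed

context
  fixes A :: "real^'n^'m" and b :: "real^'m" and v :: "real^'n" and \<beta> lam :: real and xbar :: "real^'n"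
  assumes vnn: "\<forall>i. v$i \<ge> 0" and bp: "\<beta> > 0" and lp: "lam > 0"
begin

lemma cnn': "lam * v$i \<ge> 0" using vnn lp by simp

lemma opt_b:
  assumes g0: "gradPhi A b v \<beta> lam xbar yhat = 0"
  shows "let uhat = - (1 / \<beta>) *\<^sub>R yhat;
             xhat = soft_thr lam (xbar - lam *\<^sub>R (transpose A *v yhat)) v
         in A *v xhat + uhat = b
            \<and> (\<forall>u x. A *v x + u = b \<longrightarrow>
                 primal_obj v \<beta> lam xbar uhat xhat \<le> primal_obj v \<beta> lam xbar u x)
            \<and> (\<forall>u x. A *v x + u = b \<and>
                 primal_obj v \<beta> lam xbar u x = primal_obj v \<beta> lam xbar uhat xhat
                 \<longrightarrow> u = uhat \<and> x = xhat)"
proof -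
  define uh where "uh = - (1 / \<beta>) *\<^sub>R yhat"
  define w where "w = xbar - lam *\<^sub>R (transpose A *v yhat)"
  define xh where "xh = soft_thr lam w v"
  have feas: "A *v xh + uh = b"
    using g0 unfolding gradPhi_def w_def[symmetric] xh_def[symmetric] uh_def
    by (simp add: algebra_simps)
  have key: "primal_obj v \<beta> lam xbar u x = primal_obj v \<beta> lam xbar uh xh
     + \<beta>/2 * (norm (u - uh))^2 + 1/(2*lam) * (norm (x - xh))^2
     + (1/lam) * (\<Sum>i\<in>UNIV. lam * v$i * \<bar>x$i\<bar> - lam * v$i * \<bar>xh$i\<bar> - (w$i - xh$i) * (x$i - xh$i))"
    if fx: "A *v x + u = b" for u x
  proof -
    have ud: "u - uh = A *v (xh - x)" using fx feas by (simp add: algebra_simps)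
    have N1: "\<beta>/2 * (norm u)^2 - \<beta>/2 * (norm uh)^2 = \<beta>/2 * (norm (u - uh))^2 + \<beta> * (uh \<bullet> (u - uh))"
      by (simp add: power2_norm_eq_inner inner_simps algebra_simps inner_commute)
    have N2: "1/(2*lam) * (norm (x - xbar))^2 - 1/(2*lam) * (norm (xh - xbar))^2
       = 1/(2*lam) * (norm (x - xh))^2 + (1/lam) * ((xh - xbar) \<bullet> (x - xh))"
      using lp by (simp add: power2_norm_eq_inner inner_simps field_simps inner_commute)
    have "\<beta> * (uh \<bullet> (u - uh)) = \<beta> * (uh \<bullet> (A *v (xh - x)))" using ud by simp
    also have "\<dots> = - (yhat \<bullet> (A *v (xh - x)))" unfolding uh_def using bp by simp
    also have "\<dots> = (transpose A *v yhat) \<bullet> (x - xh)"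
      by (simp add: inner_commute[of yhat] mv_inner inner_diff_left inner_diff_right)
    finally have N3: "\<beta> * (uh \<bullet> (u - uh)) = (transpose A *v yhat) \<bullet> (x - xh)" .
    have xb: "xbar = w + lam *\<^sub>R (transpose A *v yhat)" unfolding w_def by simp
    have N4: "(1/lam) * ((xh - xbar) \<bullet> (x - xh)) = (1/lam) * ((xh - w) \<bullet> (x - xh)) - (transpose A *v yhat) \<bullet> (x - xh)"
      unfolding xb using lp by (simp add: inner_diff_left inner_add_left field_simps)
    have N5: "v \<bullet> vabs x - v \<bullet> vabs xh + (1/lam) * ((xh - w) \<bullet> (x - xh)) =
       (1/lam) * (\<Sum>i\<in>UNIV. lam * v$i * \<bar>x$i\<bar> - lam * v$i * \<bar>xh$i\<bar> - (w$i - xh$i) * (x$i - xh$i))"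
    proof -
      have "v \<bullet> vabs x - v \<bullet> vabs xh + (1/lam) * ((xh - w) \<bullet> (x - xh)) =
         (\<Sum>i\<in>UNIV. v$i * \<bar>x$i\<bar>) - (\<Sum>i\<in>UNIV. v$i * \<bar>xh$i\<bar>) + (1/lam) * (\<Sum>i\<in>UNIV. (xh$i - w$i) * (x$i - xh$i))"
        unfolding inner_vec_def vabs_def by simp
      also have "\<dots> = (\<Sum>i\<in>UNIV. v$i * \<bar>x$i\<bar> - v$i * \<bar>xh$i\<bar> + (1/lam) * ((xh$i - w$i) * (x$i - xh$i)))"
        by (simp add: sum.distrib sum_subtractf sum_distrib_left)
      also have "\<dots> = (1/lam) * (\<Sum>i\<in>UNIV. lam * v$i * \<bar>x$i\<bar> - lam * v$i * \<bar>xh$i\<bar> - (w$i - xh$i) * (x$i - xh$i))"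
        unfolding sum_distrib_left by (rule sum.cong) (use lp in \<open>simp_all add: field_simps\<close>)
      finally show ?thesis .
    qed
    show ?thesis
      unfolding primal_obj_def using N1 N2 N3 N4 N5 by (simp add: algebra_simps)
  qed
  have R1: "0 \<le> lam * v$i * \<bar>x$i\<bar> - lam * v$i * \<bar>xh$i\<bar> - (w$i - xh$i) * (x$i - xh$i)" for x :: "real^'n" and i
    using prox_aux[OF cnn'[of i], of "w$i" "x$i"] unfolding xh_def soft_st by linarith
  have R0: "0 \<le> (1/lam) * (\<Sum>i\<in>UNIV. lam * v$i * \<bar>x$i\<bar> - lam * v$i * \<bar>xh$i\<bar> - (w$i - xh$i) * (x$i - xh$i))" for x
    using lp R1 by (intro mult_nonneg_nonneg sum_nonneg) auto
  have opt: "primal_obj v \<beta> lam xbar uh xh \<le> primal_obj v \<beta> lam xbar u x" if "A *v x + u = b" for u x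
    using key[OF that] R0[of x] bp lp by (simp add: add_nonneg_nonneg)
  have uniq: "u = uh \<and> x = xh" if "A *v x + u = b" "primal_obj v \<beta> lam xbar u x = primal_obj v \<beta> lam xbar uh xh" for u x
  proof -
    have z: "\<beta>/2 * (norm (u - uh))^2 + 1/(2*lam) * (norm (x - xh))^2
     + (1/lam) * (\<Sum>i\<in>UNIV. lam * v$i * \<bar>x$i\<bar> - lam * v$i * \<bar>xh$i\<bar> - (w$i - xh$i) * (x$i - xh$i)) = 0"
      using key[OF that(1)] that(2) by simp
    have "0 \<le> \<beta>/2 * (norm (u - uh))^2" "0 \<le> 1/(2*lam) * (norm (x - xh))^2" using bp lp by simp_all
    then have "\<beta>/2 * (norm (u - uh))^2 = 0" "1/(2*lam) * (norm (x - xh))^2 = 0" using z R0[of x] by linarith+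
    then show ?thesis using bp lp by simp
  qed
  show ?thesis unfolding Let_def uh_def[symmetric] w_def[symmetric] xh_def[symmetric]
    using feas opt uniq by blast
qed

end


definition sp :: "real \<Rightarrow> real \<Rightarrow> real" where "sp c z = (if z \<ge> c \<or> z < -c then 1 else 0)"
definition sm :: "real \<Rightarrow> real \<Rightarrow> real" where "sm c z = (if z > c \<or> z \<le> -c then 1 else 0)"
definition d0 :: "real \<Rightarrow> real \<Rightarrow> real" where
  "d0 c z = (if \<bar>z\<bar> \<noteq> c then \<bar>\<bar>z\<bar> - c\<bar> else if c > 0 then c else 1)"

lemma d0_pos: "c \<ge> 0 \<Longrightarrow> d0 c z > 0"
  by (auto simp: d0_def)

lemma st_right: "c \<ge> 0 \<Longrightarrow> 0 \<le> e \<Longrightarrow> e < d0 c z \<Longrightarrow> st c (z+e) - st c z = sp c z * e"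
  unfolding st_def sp_def d0_def
  by (auto simp: sgn_if abs_if max_def split: if_splits)

lemma st_left: "c \<ge> 0 \<Longrightarrow> 0 \<le> e \<Longrightarrow> e < d0 c z \<Longrightarrow> st c (z-e) - st c z = - (sm c z * e)"
  unfolding st_def sm_def d0_def
  by (auto simp: sgn_if abs_if max_def split: if_splits)

lemma st_sym: assumes "c \<ge> 0" "\<bar>e\<bar> < d0 c z"
  shows "st c (z+e) - st c (z-e) = (sp c z + sm c z) * e"
proof (cases "e \<ge> 0")
  case True then show ?thesis using st_right[of c e z] st_left[of c e z] assms by (simp add: algebra_simps)
next
  case False then show ?thesis using st_right[of c "-e" z] st_left[of c "-e" z] assms by (simp add: algebra_simps)
qed

lemma st_usc: "c \<ge> 0 \<Longrightarrow> \<bar>e\<bar> < d0 c z \<Longrightarrow> min (sp c z) (sm c z) \<le> min (sp c (z+e)) (sm c (z+e)) \<and> max (sp c (z+e)) (sm c (z+e)) \<le> max (sp c z) (sm c z)"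
  unfolding sp_def sm_def d0_def
  by (auto simp: abs_if split: if_splits)

lemma st_semi: assumes "c \<ge> 0" "\<bar>e\<bar> < d0 c z" "min (sp c (z+e)) (sm c (z+e)) \<le> d" "d \<le> max (sp c (z+e)) (sm c (z+e))"
  shows "st c (z+e) - st c z = d * e"
proof (cases "e = 0")
  case True then show ?thesis by simp
next
  case False
  have "sp c (z+e) = sm c (z+e)" "e > 0 \<Longrightarrow> sp c (z+e) = sp c z" "e < 0 \<Longrightarrow> sp c (z+e) = sm c z"
    using assms(1,2) False unfolding sp_def sm_def d0_def by (auto simp: abs_if split: if_splits)
  then have d: "d = sp c (z+e)" using assms(3,4) by auto
  show ?thesis
  proof (cases "e > 0")
    case True then show ?thesis using st_right[of c e z] assms d \<open>e > 0 \<Longrightarrow> _\<close> by simp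
  next
    case f: False
    then have "e < 0" using False by simp
    then show ?thesis using st_left[of c "-e" z] assms d \<open>e < 0 \<Longrightarrow> _\<close> by simp
  qed
qed

definition diagm :: "real^'n \<Rightarrow> real^'n^'n" where
  "diagm d = (\<chi> i j. if i = j then d$i else 0)"

lemma diag_mv: "diagm d *v w = (\<chi> i. d$i * w$i)"
proof -
  have "(\<Sum>j\<in>UNIV. (if i = j then d$i else 0) * w$j) = (\<Sum>j\<in>UNIV. if i = j then d$i * w$j else 0)" for i
    by (rule sum.cong) auto
  also have "\<dots> i = d$i * w$i" for i by simp
  finally show ?thesis unfolding diagm_def matrix_vector_mult_def vec_eq_iff by simp
qed

definition Lm :: "real^'n^'m \<Rightarrow> real^'n \<Rightarrow> real^'m^'m" where
  "Lm A d = A ** diagm d ** transpose A"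

lemma Lm_nth: "Lm A d $ i $ j = (\<Sum>k\<in>UNIV. A$i$k * d$k * A$j$k)"
  unfolding Lm_def matrix_matrix_mult_def diagm_def transpose_def
  by (simp add: if_distrib sum_distrib_right cong: if_cong)

lemma Lm_comb: "Lm A (u *\<^sub>R d1 + w *\<^sub>R d2) = u *\<^sub>R Lm A d1 + w *\<^sub>R Lm A d2"
proof -
  have "(\<Sum>k\<in>UNIV. A$i$k * (u * d1$k + w * d2$k) * A$j$k) = u * (\<Sum>k\<in>UNIV. A$i$k * d1$k * A$j$k) + w * (\<Sum>k\<in>UNIV. A$i$k * d2$k * A$j$k)" for i j
    unfolding sum_distrib_left sum.distrib[symmetric] by (rule sum.cong) (simp_all add: algebra_simps)
  then show ?thesis by (simp add: vec_eq_iff Lm_nth)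
qed

lemma Lm_cont: "continuous_on S (Lm A)"
proof -
  have e: "Lm A = (\<lambda>d. \<chi> i j. (\<Sum>k\<in>UNIV. A$i$k * d$k * A$j$k))"
    by (rule ext) (simp add: vec_eq_iff Lm_nth)
  show ?thesis unfolding e by (intro continuous_intros)
qed

lemma Lm_mv: "Lm A d *v h = A *v (diagm d *v (transpose A *v h))"
  unfolding Lm_def by (simp only: matrix_vector_mul_assoc matrix_mul_assoc)

lemma Mmat_mv: fixes A :: "real^'n^'m"
  shows "((1/\<beta>) *\<^sub>R mat 1 + lam *\<^sub>R Lm A d) *v h = (1/\<beta>) *\<^sub>R h + lam *\<^sub>R (A *v (diagm d *v (transpose A *v h)))"
  by (simp only: matrix_vector_mult_add_rdistrib scaleR_matrix_vector_assoc[symmetric] Lm_mv matrix_vector_mul_lid)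



definition zf :: "real^'n^'m \<Rightarrow> real \<Rightarrow> real^'n \<Rightarrow> real^'m \<Rightarrow> real^'n" where
  "zf A lam xbar y = xbar - lam *\<^sub>R (transpose A *v y)"
definition lov :: "real \<Rightarrow> real^'n \<Rightarrow> real^'n \<Rightarrow> real^'n" where
  "lov lam v z = (\<chi> i. min (sp (lam * v$i) (z$i)) (sm (lam * v$i) (z$i)))"
definition hiv :: "real \<Rightarrow> real^'n \<Rightarrow> real^'n \<Rightarrow> real^'n" where
  "hiv lam v z = (\<chi> i. max (sp (lam * v$i) (z$i)) (sm (lam * v$i) (z$i)))"
definition dhv :: "real \<Rightarrow> real^'n \<Rightarrow> real^'n \<Rightarrow> real^'n" where
  "dhv lam v z = (\<chi> i. (sp (lam * v$i) (z$i) + sm (lam * v$i) (z$i)) / 2)"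
definition Mm :: "real \<Rightarrow> real \<Rightarrow> real^'n^'m \<Rightarrow> real^'n \<Rightarrow> real^'m^'m" where
  "Mm \<beta> lam A d = (1/\<beta>) *\<^sub>R mat 1 + lam *\<^sub>R Lm A d"

lemma Min_d0_pos: fixes f :: "'n::finite \<Rightarrow> real" assumes "\<And>i. f i > 0" shows "Min (range f) > 0"
  using assms by (subst Min_gr_iff) auto

lemma Min_d0_le: fixes f :: "'n::finite \<Rightarrow> real" shows "Min (range f) \<le> f i"
  by (rule Min_le) auto

lemma comp_le_dist: fixes x y :: "real^'n" shows "\<bar>x$i - y$i\<bar> \<le> dist x y"
  using dist_vec_nth_le[of x i y] by (simp add: dist_real_def)

lemma Mm_cont: "continuous_on S (Mm \<beta> lam A)"
proof -
  have "continuous_on S (\<lambda>d. (1/\<beta>) *\<^sub>R mat 1 + lam *\<^sub>R Lm A d)"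
    by (intro continuous_on_add continuous_on_const continuous_on_scaleR Lm_cont)
  then show ?thesis unfolding Mm_def .
qed

lemma Mm_comb: "u + w = 1 \<Longrightarrow> u *\<^sub>R Mm \<beta> lam A d1 + w *\<^sub>R Mm \<beta> lam A d2 = Mm \<beta> lam A (u *\<^sub>R d1 + w *\<^sub>R d2)"
proof -
  assume uw: "u + w = 1"
  have "u *\<^sub>R Mm \<beta> lam A d1 + w *\<^sub>R Mm \<beta> lam A d2 = (u + w) *\<^sub>R ((1/\<beta>) *\<^sub>R mat 1) + lam *\<^sub>R (u *\<^sub>R Lm A d1 + w *\<^sub>R Lm A d2)"
    unfolding Mm_def by (simp add: algebra_simps add_divide_distrib)
  also have "\<dots> = Mm \<beta> lam A (u *\<^sub>R d1 + w *\<^sub>R d2)" unfolding Mm_def Lm_comb uw by simp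
  finally show ?thesis .
qed

lemma Mm_mv: "Mm \<beta> lam A d *v h = (1/\<beta>) *\<^sub>R h + lam *\<^sub>R (A *v (diagm d *v (transpose A *v h)))"
  unfolding Mm_def by (rule Mmat_mv)

lemma T_closed: "closed (Mm \<beta> lam A ` cbox lo hi)"
  by (intro compact_imp_closed compact_continuous_image Mm_cont compact_cbox)

lemma T_convex: "convex (Mm \<beta> lam A ` cbox lo hi)"
  unfolding convex_def
proof (intro ballI allI impI)
  fix x y and u w :: real assume x: "x \<in> Mm \<beta> lam A ` cbox lo hi" and y: "y \<in> Mm \<beta> lam A ` cbox lo hi" and uw: "0 \<le> u" "0 \<le> w" "u + w = 1"
  from x y obtain d1 d2 where d: "d1 \<in> cbox lo hi" "d2 \<in> cbox lo hi" "x = Mm \<beta> lam A d1" "y = Mm \<beta> lam A d2" by blast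
  have "u *\<^sub>R d1 + w *\<^sub>R d2 \<in> cbox lo hi" using convex_box(1)[of lo hi] d uw unfolding convex_def by blast
  then show "u *\<^sub>R x + w *\<^sub>R y \<in> Mm \<beta> lam A ` cbox lo hi" unfolding d(3,4) Mm_comb[OF uw(3)] by blast
qed

context
  fixes A :: "real^'n^'m" and b :: "real^'m" and v :: "real^'n" and \<beta> lam :: real and xbar :: "real^'n"
  assumes vnn: "\<forall>i. v$i \<ge> 0" and bp: "\<beta> > 0" and lp: "lam > 0"
begin

lemma cnn5: "lam * v$i \<ge> 0" using vnn lp by simp

lemma F_diff5: "gradPhi A b v \<beta> lam xbar y - gradPhi A b v \<beta> lam xbar y' =
   (1/\<beta>) *\<^sub>R (y - y') - A *v (soft_thr lam (zf A lam xbar y) v - soft_thr lam (zf A lam xbar y') v)"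
  by (simp add: gradPhi_def zf_def algebra_simps)

lemma core_J:
  assumes dif: "gradPhi A b v \<beta> lam xbar differentiable (at y)"
  shows "matrix (frechet_derivative (gradPhi A b v \<beta> lam xbar) (at y)) = Mm \<beta> lam A (dhv lam v (zf A lam xbar y))"
proof -
  let ?F = "gradPhi A b v \<beta> lam xbar"
  define f' where "f' = frechet_derivative ?F (at y)"
  have Fd: "(?F has_derivative f') (at y)" using dif frechet_derivative_works f'_def by blast
  have bl: "bounded_linear f'" using Fd by (rule has_derivative_bounded_linear)
  define z where "z = zf A lam xbar y"
  define K where "K = Mm \<beta> lam A (dhv lam v z)"
  have fK: "f' h = K *v h" for h
  proof -
    define w where "w = lam *\<^sub>R (transpose A *v h)"
    define g where "g = (\<lambda>t::real. ?F (y + t *\<^sub>R h) - ?F (y - t *\<^sub>R h))"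
    have i1: "((\<lambda>t::real. y + t *\<^sub>R h) has_derivative (\<lambda>t. t *\<^sub>R h)) (at 0)"
      by (auto intro!: derivative_eq_intros)
    have i2: "((\<lambda>t::real. y - t *\<^sub>R h) has_derivative (\<lambda>t. - (t *\<^sub>R h))) (at 0)"
      by (auto intro!: derivative_eq_intros)
    have F1: "(?F has_derivative f') (at ((\<lambda>t::real. y + t *\<^sub>R h) 0))" using Fd by simp
    have F2: "(?F has_derivative f') (at ((\<lambda>t::real. y - t *\<^sub>R h) 0))" using Fd by simp
    have "(g has_derivative (\<lambda>t. f' (t *\<^sub>R h) - f' (- (t *\<^sub>R h)))) (at 0)"
      unfolding g_def by (rule has_derivative_diff[OF has_derivative_compose[OF i1 F1] has_derivative_compose[OF i2 F2]])
    moreover have "(\<lambda>t. f' (t *\<^sub>R h) - f' (- (t *\<^sub>R h))) = (\<lambda>t. t *\<^sub>R (2 *\<^sub>R f' h))"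
    proof
      fix t :: real
      have l1: "f' (t *\<^sub>R h) = t *\<^sub>R f' h" "f' (- (t *\<^sub>R h)) = - (t *\<^sub>R f' h)" using bl by (simp_all add: linear_simps)
      show "f' (t *\<^sub>R h) - f' (- (t *\<^sub>R h)) = t *\<^sub>R (2 *\<^sub>R f' h)"
        unfolding l1 by (simp add: scaleR_2 scaleR_right_distrib)
    qed
    ultimately have gd1: "(g has_derivative (\<lambda>t. t *\<^sub>R (2 *\<^sub>R f' h))) (at 0)" by simp
    define \<delta> where "\<delta> = Min (range (\<lambda>i. d0 (lam * v$i) (z$i) / (\<bar>w$i\<bar> + 1)))"
    have \<delta>pos: "\<delta> > 0" unfolding \<delta>_def by (rule Min_d0_pos) (simp add: d0_pos[OF cnn5] add_pos_nonneg)
    have loc: "g t = t *\<^sub>R (2 *\<^sub>R (K *v h))" if t: "dist t 0 < \<delta>" for t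
    proof -
      have tw: "\<bar>t * w$i\<bar> < d0 (lam * v$i) (z$i)" for i
      proof -
        have "\<bar>t * w$i\<bar> \<le> \<bar>t\<bar> * (\<bar>w$i\<bar> + 1)" by (simp add: abs_mult mult_left_mono)
        also have "\<dots> < \<delta> * (\<bar>w$i\<bar> + 1)" using t by (intro mult_strict_right_mono) (auto simp: dist_real_def)
        also have "\<dots> \<le> d0 (lam * v$i) (z$i) / (\<bar>w$i\<bar> + 1) * (\<bar>w$i\<bar> + 1)"
          unfolding \<delta>_def by (intro mult_right_mono Min_d0_le) auto
        also have "\<dots> = d0 (lam * v$i) (z$i)" by simp
        finally show ?thesis .
      qed
      have z1: "zf A lam xbar (y + t *\<^sub>R h) = z - t *\<^sub>R w" "zf A lam xbar (y - t *\<^sub>R h) = z + t *\<^sub>R w"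
        unfolding z_def zf_def w_def by (simp_all add: algebra_simps)
      have Sd: "soft_thr lam (z - t *\<^sub>R w) v - soft_thr lam (z + t *\<^sub>R w) v = - (2 * t) *\<^sub>R (diagm (dhv lam v z) *v w)"
      proof -
        have "st (lam * v$i) (z$i - t * w$i) - st (lam * v$i) (z$i + t * w$i) = - (2 * t) * ((sp (lam * v$i) (z$i) + sm (lam * v$i) (z$i)) / 2 * w$i)" for i
          using st_sym[OF cnn5 tw[of i]] by (simp add: algebra_simps)
        then show ?thesis by (simp add: vec_eq_iff soft_st diag_mv dhv_def)
      qed
      have yy: "(y + t *\<^sub>R h) - (y - t *\<^sub>R h) = (2 * t) *\<^sub>R h"
      proof -
        have "(y + t *\<^sub>R h) - (y - t *\<^sub>R h) = t *\<^sub>R h + t *\<^sub>R h" by simp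
        also have "\<dots> = (2 * t) *\<^sub>R h" unfolding mult_2 scaleR_left_distrib ..
        finally show ?thesis .
      qed
      have AX: "A *v ((- (2 * t)) *\<^sub>R (diagm (dhv lam v z) *v w)) = (- (2 * t)) *\<^sub>R (A *v (diagm (dhv lam v z) *v w))"
        by (rule matrix_vector_mult_scaleR)
      have "g t = (1/\<beta>) *\<^sub>R ((y + t *\<^sub>R h) - (y - t *\<^sub>R h)) - A *v (soft_thr lam (z - t *\<^sub>R w) v - soft_thr lam (z + t *\<^sub>R w) v)"
        unfolding g_def F_diff5 z1 ..
      also have "\<dots> = (1/\<beta>) *\<^sub>R ((2 * t) *\<^sub>R h) - (- (2 * t)) *\<^sub>R (A *v (diagm (dhv lam v z) *v w))"
        unfolding Sd yy AX ..
      also have "\<dots> = t *\<^sub>R (2 *\<^sub>R (K *v h))"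
        unfolding K_def Mm_mv w_def by (simp add: matrix_vector_mult_scaleR algebra_simps)
      finally show ?thesis .
    qed
    have "((\<lambda>t. t *\<^sub>R (2 *\<^sub>R (K *v h))) has_derivative (\<lambda>t. t *\<^sub>R (2 *\<^sub>R (K *v h)))) (at (0::real))"
      by (auto intro!: derivative_eq_intros)
    then have gd2: "(g has_derivative (\<lambda>t. t *\<^sub>R (2 *\<^sub>R (K *v h)))) (at 0)"
      by (rule has_derivative_transform_within[OF _ \<delta>pos]) (auto simp: loc)
    have "(\<lambda>t. t *\<^sub>R (2 *\<^sub>R f' h)) = (\<lambda>t::real. t *\<^sub>R (2 *\<^sub>R (K *v h)))"
      by (rule has_derivative_unique[OF gd1 gd2])
    then have "(1::real) *\<^sub>R (2 *\<^sub>R f' h) = 1 *\<^sub>R (2 *\<^sub>R (K *v h))" by metis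
    then show ?thesis by simp
  qed
  have "f' = (\<lambda>h. K *v h)" using fK by auto
  then show ?thesis unfolding f'_def[symmetric] K_def z_def by simp
qed

lemma bouligand_sub: "bouligand_jac (gradPhi A b v \<beta> lam xbar) y \<subseteq>
   Mm \<beta> lam A ` cbox (lov lam v (zf A lam xbar y)) (hiv lam v (zf A lam xbar y))"
proof
  fix V assume "V \<in> bouligand_jac (gradPhi A b v \<beta> lam xbar) y"
  then obtain s where s: "\<And>k. gradPhi A b v \<beta> lam xbar differentiable (at (s k))" "s \<longlonglongrightarrow> y"
    "(\<lambda>k. matrix (frechet_derivative (gradPhi A b v \<beta> lam xbar) (at (s k)))) \<longlonglongrightarrow> V"
    unfolding bouligand_jac_def by blast
  define z where "z = zf A lam xbar y"
  define \<delta> where "\<delta> = Min (range (\<lambda>i. d0 (lam * v$i) (z$i)))"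
  have \<delta>pos: "\<delta> > 0" unfolding \<delta>_def by (rule Min_d0_pos) (simp add: d0_pos[OF cnn5])
  have zt: "(\<lambda>k. zf A lam xbar (s k)) \<longlonglongrightarrow> z"
    unfolding zf_def z_def
    by (intro tendsto_intros bounded_linear.tendsto[OF matrix_vector_mul_bounded_linear] s(2))
  have ev: "eventually (\<lambda>k. dist (zf A lam xbar (s k)) z < \<delta>) sequentially"
    using zt \<delta>pos by (rule tendstoD)
  have "eventually (\<lambda>k. matrix (frechet_derivative (gradPhi A b v \<beta> lam xbar) (at (s k))) \<in>
       Mm \<beta> lam A ` cbox (lov lam v z) (hiv lam v z)) sequentially"
    using ev
  proof eventually_elim
    case (elim k)
    define z' where "z' = zf A lam xbar (s k)"
    have "dhv lam v z' \<in> cbox (lov lam v z) (hiv lam v z)"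
      unfolding mem_box_cart
    proof
      fix i
      have e: "\<bar>z'$i - z$i\<bar> < d0 (lam * v$i) (z$i)"
        using comp_le_dist[of z' i z] elim Min_d0_le[where f="\<lambda>i. d0 (lam * v$i) (z$i)" and i=i] unfolding z'_def \<delta>_def by linarith
      have zz: "z'$i = z$i + (z'$i - z$i)" by simp
      show "lov lam v z $ i \<le> dhv lam v z' $ i \<and> dhv lam v z' $ i \<le> hiv lam v z $ i"
        using st_usc[OF cnn5 e] unfolding lov_def hiv_def dhv_def zz[symmetric] by auto
    qed
    then show ?case using core_J[OF s(1)[of k]] unfolding z'_def by simp
  qed
  then show "V \<in> Mm \<beta> lam A ` cbox (lov lam v (zf A lam xbar y)) (hiv lam v (zf A lam xbar y))"
    unfolding z_def[symmetric]
    by (rule Lim_in_closed_set[OF T_closed _ trivial_limit_sequentially s(3)])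
qed

lemma clarke_sub: "clarke_jac (gradPhi A b v \<beta> lam xbar) y \<subseteq>
   Mm \<beta> lam A ` cbox (lov lam v (zf A lam xbar y)) (hiv lam v (zf A lam xbar y))"
  unfolding clarke_jac_def by (rule hull_minimal[OF bouligand_sub]) (rule T_convex)

end


context
  fixes A :: "real^'n^'m" and b :: "real^'m" and v :: "real^'n" and \<beta> lam :: real and xbar :: "real^'n"
  assumes vnn: "\<forall>i. v$i \<ge> 0" and bp: "\<beta> > 0" and lp: "lam > 0"
begin

lemma cnn6: "lam * v$i \<ge> 0" using vnn lp by simp

lemma vertex:
  assumes dv: "\<forall>i. d$i = sp (lam * v$i) (z$i) \<or> d$i = sm (lam * v$i) (z$i)"
  shows "diagm d \<in> bouligand_jac (\<lambda>x. soft_thr lam x v) z"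
proof -
  define e where "e = (\<chi> i. if d$i = sp (lam * v$i) (z$i) then (1::real) else -1)"
  define \<delta> where "\<delta> = Min (range (\<lambda>i. d0 (lam * v$i) (z$i)))"
  have \<delta>pos: "\<delta> > 0" unfolding \<delta>_def by (rule Min_d0_pos) (simp add: d0_pos[OF cnn6])
  have \<delta>le: "\<delta> \<le> d0 (lam * v$i) (z$i)" for i unfolding \<delta>_def by (rule Min_d0_le)
  define s where "s = (\<lambda>k::nat. z + (\<delta> / real (k + 2)) *\<^sub>R e)"
  have deriv: "((\<lambda>x. soft_thr lam x v) has_derivative (\<lambda>h. diagm d *v h)) (at (s k))" for k
  proof -
    define \<tau> where "\<tau> = \<delta> / real (k + 2)"
    have \<tau>: "0 < \<tau>" "\<tau> < \<delta>" unfolding \<tau>_def using \<delta>pos by (auto simp: field_simps add_pos_nonneg)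
    define \<rho> where "\<rho> = min \<tau> (\<delta> - \<tau>)"
    have \<rho>: "\<rho> > 0" unfolding \<rho>_def using \<tau> by simp
    have loc: "soft_thr lam (s k) v + diagm d *v (q - s k) = soft_thr lam q v" if q: "dist q (s k) < \<rho>" for q
    proof -
      have "soft_thr lam q v $ i = soft_thr lam (s k) v $ i + d$i * (q$i - s k $ i)" for i
      proof -
        define hh where "hh = q$i - s k $ i"
        have hh: "\<bar>hh\<bar> < \<rho>" using comp_le_dist[of q i "s k"] q unfolding hh_def by linarith
        have sk: "s k $ i = z$i + \<tau> * e$i" unfolding s_def \<tau>_def by simp
        show ?thesis
        proof (cases "d$i = sp (lam * v$i) (z$i)")
          case True
          then have ei: "e$i = 1" unfolding e_def by simp
          have a: "st (lam * v$i) (z$i + (\<tau> + hh)) - st (lam * v$i) (z$i) = sp (lam * v$i) (z$i) * (\<tau> + hh)"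
            using hh \<tau> \<delta>le[of i] unfolding \<rho>_def by (intro st_right[OF cnn6]) auto
          have b: "st (lam * v$i) (z$i + \<tau>) - st (lam * v$i) (z$i) = sp (lam * v$i) (z$i) * \<tau>"
            using \<tau> \<delta>le[of i] by (intro st_right[OF cnn6]) auto
          have qi: "q$i = z$i + (\<tau> + hh)" using sk ei unfolding hh_def by simp
          show ?thesis unfolding soft_st qi using a b True sk ei unfolding hh_def by (simp add: algebra_simps)
        next
          case False
          then have ei: "e$i = -1" and di: "d$i = sm (lam * v$i) (z$i)" unfolding e_def using dv by auto
          have a: "st (lam * v$i) (z$i - (\<tau> - hh)) - st (lam * v$i) (z$i) = - (sm (lam * v$i) (z$i) * (\<tau> - hh))"
            using hh \<tau> \<delta>le[of i] unfolding \<rho>_def by (intro st_left[OF cnn6]) auto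
          have b: "st (lam * v$i) (z$i - \<tau>) - st (lam * v$i) (z$i) = - (sm (lam * v$i) (z$i) * \<tau>)"
            using \<tau> \<delta>le[of i] by (intro st_left[OF cnn6]) auto
          have qi: "q$i = z$i - (\<tau> - hh)" using sk ei unfolding hh_def by simp
          have ski: "s k $ i = z$i - \<tau>" using sk ei by simp
          have hh2: "hh = q$i - (z$i - \<tau>)" unfolding hh_def ski ..
          show ?thesis unfolding soft_st qi ski using a b di unfolding hh2 by (simp add: algebra_simps)
        qed
      qed
      then show ?thesis by (simp add: vec_eq_iff diag_mv)
    qed
    have "((\<lambda>q. soft_thr lam (s k) v + diagm d *v (q - s k)) has_derivative (\<lambda>h. diagm d *v h)) (at (s k))"
      by (auto intro!: derivative_eq_intros bounded_linear.has_derivative[OF matrix_vector_mul_bounded_linear])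
    then show ?thesis
      by (rule has_derivative_transform_within[OF _ \<rho>]) (auto simp: loc)
  qed
  have st: "s \<longlonglongrightarrow> z"
  proof -
    have "(\<lambda>k. \<delta> / real k) \<longlonglongrightarrow> 0" by (rule lim_const_over_n)
    then have "(\<lambda>k. \<delta> / real (k + 2)) \<longlonglongrightarrow> 0" by (rule LIMSEQ_ignore_initial_segment)
    then have "(\<lambda>k. z + (\<delta> / real (k + 2)) *\<^sub>R e) \<longlonglongrightarrow> z + 0 *\<^sub>R e" by (intro tendsto_intros)
    then show ?thesis unfolding s_def by simp
  qed
  have mat: "matrix (frechet_derivative (\<lambda>x. soft_thr lam x v) (at (s k))) = diagm d" for k
    using frechet_derivative_at[OF deriv[of k]] by (metis matrix_of_matrix_vector_mul)
  show ?thesis unfolding bouligand_jac_def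
    using deriv st mat by (auto intro!: exI[of _ s] differentiableI)
qed

lemma diagm_comb: "diagm (u *\<^sub>R d1 + w *\<^sub>R d2) = u *\<^sub>R diagm d1 + w *\<^sub>R diagm d2"
  by (simp add: vec_eq_iff diagm_def)

lemma box_clarke:
  assumes d: "d \<in> cbox (lov lam v z) (hiv lam v z)"
  shows "diagm d \<in> clarke_jac (\<lambda>x. soft_thr lam x v) z"
proof -
  let ?C = "clarke_jac (\<lambda>x. soft_thr lam x v) z"
  let ?P = "\<lambda>d i. d$i = sp (lam * v$i) (z$i) \<or> d$i = sm (lam * v$i) (z$i)"
  have cvx: "convex ?C" unfolding clarke_jac_def by simp
  have main: "\<forall>d. d \<in> cbox (lov lam v z) (hiv lam v z) \<longrightarrow> (\<forall>i. i \<notin> J \<longrightarrow> ?P d i) \<longrightarrow> diagm d \<in> ?C"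
    if "finite J" for J
    using that
  proof (induction J rule: finite_induct)
    case empty
    show ?case unfolding clarke_jac_def using vertex by (auto intro: hull_inc)
  next
    case (insert j J)
    show ?case
    proof (intro allI impI)
      fix d assume dB: "d \<in> cbox (lov lam v z) (hiv lam v z)" and dP: "\<forall>i. i \<notin> insert j J \<longrightarrow> ?P d i"
      show "diagm d \<in> ?C"
      proof (cases "?P d j")
        case True
        then have "\<forall>i. i \<notin> J \<longrightarrow> ?P d i" using dP by auto
        then show ?thesis using insert.IH dB by blast
      next
        case False
        define a where "a = lov lam v z $ j"
        define c where "c = hiv lam v z $ j"
        have adc: "a \<le> d$j" "d$j \<le> c" using dB unfolding a_def c_def mem_box_cart by auto
        have aP: "a = sp (lam * v$j) (z$j) \<or> a = sm (lam * v$j) (z$j)" "c = sp (lam * v$j) (z$j) \<or> c = sm (lam * v$j) (z$j)"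
          unfolding a_def c_def lov_def hiv_def by (auto simp: min_def max_def)
        have ac: "a < d$j" "d$j < c" using adc aP False by (auto simp: order.order_iff_strict)
        define d1 where "d1 = (\<chi> i. if i = j then a else d$i)"
        define d2 where "d2 = (\<chi> i. if i = j then c else d$i)"
        define t where "t = (d$j - a) / (c - a)"
        have t: "0 \<le> t" "t \<le> 1" unfolding t_def using ac by auto
        have lohi: "lov lam v z $ i \<le> hiv lam v z $ i" for i unfolding lov_def hiv_def by simp
        have d1B: "d1 \<in> cbox (lov lam v z) (hiv lam v z)" "d2 \<in> cbox (lov lam v z) (hiv lam v z)"
          using dB lohi unfolding mem_box_cart d1_def d2_def a_def c_def by auto
        have d12P: "\<forall>i. i \<notin> J \<longrightarrow> ?P d1 i" "\<forall>i. i \<notin> J \<longrightarrow> ?P d2 i"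
          using dP aP unfolding d1_def d2_def by auto
        have m1: "diagm d1 \<in> ?C" "diagm d2 \<in> ?C" using insert.IH d1B d12P by blast+
        have dd: "d = (1 - t) *\<^sub>R d1 + t *\<^sub>R d2"
        proof -
          have ca: "c - a \<noteq> 0" using ac by simp
          have "(1 - t) * a + t * c = a + t * (c - a)" by (simp add: algebra_simps)
          also have "t * (c - a) = d$j - a" unfolding t_def using ca by simp
          finally have "d$j = (1 - t) * a + t * c" by simp
          then show ?thesis unfolding d1_def d2_def by (auto simp: vec_eq_iff algebra_simps)
        qed
        show ?thesis unfolding dd diagm_comb using cvx m1 t unfolding convex_def by auto
      qed
    qed
  qed
  show ?thesis using main[of UNIV] d by simp
qed

lemma T_sub_rhs: "Mm \<beta> lam A ` cbox (lov lam v z) (hiv lam v z) \<subseteq>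
   {(1 / \<beta>) *\<^sub>R mat 1 + lam *\<^sub>R (A ** D ** transpose A) | D. D \<in> clarke_jac (\<lambda>x. soft_thr lam x v) z}"
  using box_clarke unfolding Mm_def Lm_def by blast

end


context
  fixes A :: "real^'n^'m" and b :: "real^'m" and v :: "real^'n" and \<beta> lam :: real and xbar :: "real^'n"
  assumes vnn: "\<forall>i. v$i \<ge> 0" and bp: "\<beta> > 0" and lp: "lam > 0"
begin

lemma cnn7: "lam * v$i \<ge> 0" using vnn lp by simp

lemma semi_at: "strongly_semismooth_at (gradPhi A b v \<beta> lam xbar) x"
proof -
  let ?F = "gradPhi A b v \<beta> lam xbar"
  define z where "z = zf A lam xbar x"
  have c1: "\<exists>e>0. \<exists>L. lipschitz_on L (ball x e) ?F"
  proof -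
    obtain L where "lipschitz_on L UNIV ?F" using F_lip[OF vnn bp lp] by blast
    then have "lipschitz_on L (ball x 1) ?F" by (rule lipschitz_on_subset) simp
    then show ?thesis by (intro exI[of _ 1]) auto
  qed
  have c2: "\<exists>l. ((\<lambda>t. (1 / t) *\<^sub>R (?F (x + t *\<^sub>R dd) - ?F x)) \<longlongrightarrow> l) (at_right 0)" for dd
  proof -
    define W where "W = lam *\<^sub>R (transpose A *v dd)"
    define R where "R = (\<chi> i. if W$i \<ge> 0 then - (sm (lam * v$i) (z$i) * W$i) else - (sp (lam * v$i) (z$i) * W$i))"
    define \<delta> where "\<delta> = Min (range (\<lambda>i. d0 (lam * v$i) (z$i) / (\<bar>W$i\<bar> + 1)))"
    have \<delta>pos: "\<delta> > 0" unfolding \<delta>_def by (rule Min_d0_pos) (simp add: d0_pos[OF cnn7] add_pos_nonneg)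
    have "eventually (\<lambda>t. (1 / t) *\<^sub>R (?F (x + t *\<^sub>R dd) - ?F x) = (1/\<beta>) *\<^sub>R dd - A *v R) (at_right 0)"
      unfolding eventually_at_right_field
    proof (intro exI[of _ \<delta>] conjI allI impI)
      show "0 < \<delta>" by (rule \<delta>pos)
      fix t :: real assume t: "0 < t" "t < \<delta>"
      have tw: "t * \<bar>W$i\<bar> < d0 (lam * v$i) (z$i)" for i
      proof -
        have "t * \<bar>W$i\<bar> \<le> t * (\<bar>W$i\<bar> + 1)" using t by simp
        also have "\<dots> < \<delta> * (\<bar>W$i\<bar> + 1)" using t by (intro mult_strict_right_mono) auto
        also have "\<dots> \<le> d0 (lam * v$i) (z$i) / (\<bar>W$i\<bar> + 1) * (\<bar>W$i\<bar> + 1)"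
          unfolding \<delta>_def by (intro mult_right_mono Min_d0_le) auto
        also have "\<dots> = d0 (lam * v$i) (z$i)" by simp
        finally show ?thesis .
      qed
      have zt: "zf A lam xbar (x + t *\<^sub>R dd) = z - t *\<^sub>R W" unfolding z_def zf_def W_def by (simp add: algebra_simps)
      have SR: "soft_thr lam (z - t *\<^sub>R W) v - soft_thr lam z v = t *\<^sub>R R"
      proof -
        have "st (lam * v$i) (z$i - t * W$i) - st (lam * v$i) (z$i) = t * R$i" for i
        proof (cases "W$i \<ge> 0")
          case True
          then show ?thesis using st_left[OF cnn7[of i], where e="t * W$i" and z="z$i"] tw[of i] t unfolding R_def by (simp add: algebra_simps)
        next
          case False
          have tw0: "t * W$i \<le> 0" using t False by (simp add: mult_nonneg_nonpos)
          then have "z$i - t * W$i = z$i + t * (- W$i)" by simp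
          then show ?thesis using st_right[OF cnn7[of i], where e="t * (- W$i)" and z="z$i"] tw[of i] t False tw0 unfolding R_def
            by (simp add: algebra_simps)
        qed
        then show ?thesis by (simp add: vec_eq_iff soft_st)
      qed
      have "?F (x + t *\<^sub>R dd) - ?F x = (1/\<beta>) *\<^sub>R (t *\<^sub>R dd) - A *v (t *\<^sub>R R)"
        unfolding F_diff5[OF vnn bp lp] zt z_def[symmetric] SR by simp
      also have "\<dots> = t *\<^sub>R ((1/\<beta>) *\<^sub>R dd - A *v R)" by (simp add: matrix_vector_mult_scaleR algebra_simps)
      finally show "(1 / t) *\<^sub>R (?F (x + t *\<^sub>R dd) - ?F x) = (1/\<beta>) *\<^sub>R dd - A *v R" using t by simp
    qed
    then show ?thesis by (intro exI) (rule tendsto_eventually)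
  qed
  have c3: "\<exists>C \<delta>. \<delta> > 0 \<and> (\<forall>h. 0 < norm h \<and> norm h < \<delta> \<longrightarrow>
         (\<forall>V \<in> clarke_jac ?F (x + h). norm (?F (x + h) - ?F x - V *v h) \<le> C * (norm h)\<^sup>2))"
  proof -
    obtain BT where BT: "BT > 0" "\<And>y. norm (transpose A *v y) \<le> BT * norm y" using mat_bound by blast
    define \<delta>z where "\<delta>z = Min (range (\<lambda>i. d0 (lam * v$i) (z$i)))"
    have \<delta>zpos: "\<delta>z > 0" unfolding \<delta>z_def by (rule Min_d0_pos) (simp add: d0_pos[OF cnn7])
    have \<delta>zle: "\<delta>z \<le> d0 (lam * v$i) (z$i)" for i unfolding \<delta>z_def by (rule Min_d0_le)
    define \<delta> where "\<delta> = \<delta>z / (lam * BT)"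
    have \<delta>pos: "\<delta> > 0" unfolding \<delta>_def using \<delta>zpos lp BT by simp
    have "norm (?F (x + h) - ?F x - V *v h) \<le> 0 * (norm h)\<^sup>2"
      if h: "norm h < \<delta>" and V: "V \<in> clarke_jac ?F (x + h)" for h V
    proof -
      define W where "W = lam *\<^sub>R (transpose A *v h)"
      have Wi: "\<bar>W$i\<bar> < d0 (lam * v$i) (z$i)" for i
      proof -
        have "\<bar>W$i\<bar> \<le> norm W" by (rule component_le_norm_cart)
        also have "\<dots> \<le> lam * (BT * norm h)" unfolding W_def using lp BT(2)[of h] by (simp add: mult_left_mono)
        also have "\<dots> < lam * (BT * \<delta>)" using h lp BT by simp
        also have "\<dots> = \<delta>z" unfolding \<delta>_def using lp BT by simp
        finally show ?thesis using \<delta>zle[of i] by linarith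
      qed
      have zh: "zf A lam xbar (x + h) = z - W" unfolding z_def zf_def W_def by (simp add: algebra_simps)
      from clarke_sub[where A=A and b=b and xbar=xbar and y="x+h", OF vnn bp lp] V obtain d where
        d: "d \<in> cbox (lov lam v (z - W)) (hiv lam v (z - W))" "V = Mm \<beta> lam A d"
        unfolding zh by blast
      have SW: "soft_thr lam (z - W) v - soft_thr lam z v = - (diagm d *v W)"
      proof -
        have "st (lam * v$i) (z$i + (- W$i)) - st (lam * v$i) (z$i) = d$i * (- W$i)" for i
          using d(1) Wi[of i] unfolding mem_box_cart lov_def hiv_def
          by (intro st_semi[OF cnn7]) auto
        then show ?thesis by (simp add: vec_eq_iff soft_st diag_mv)
      qed
      have "?F (x + h) - ?F x - V *v h = (1/\<beta>) *\<^sub>R h + A *v (diagm d *v W) - V *v h"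
      proof -
        have neg: "A *v (- u) = - (A *v u)" for u :: "real^'n" using matrix_vector_mult_diff_distrib[of A 0 u] by simp
        show ?thesis unfolding F_diff5[OF vnn bp lp] zh z_def[symmetric] SW neg by simp
      qed
      also have "\<dots> = 0"
        unfolding d(2) Mm_mv W_def by (simp add: matrix_vector_mult_scaleR)
      finally show ?thesis by simp
    qed
    then show ?thesis using \<delta>pos by blast
  qed
  show ?thesis unfolding strongly_semismooth_at_def using c1 c2 c3 by blast
qed

end
theorem lemma4p1:
  fixes A :: "real^'n^'m" and b :: "real^'m" and v :: "real^'n"
    and \<beta> lam :: real and xbar :: "real^'n"
  assumes v_nonneg: "\<forall>i. v $ i \<ge> 0"
    and beta_pos: "\<beta> > 0" and lam_pos: "lam > 0"
  shows
   "(convex_on UNIV (Phi A b v \<beta> lam xbar)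
     \<and> (\<forall>y. (Phi A b v \<beta> lam xbar has_derivative (\<lambda>h. gradPhi A b v \<beta> lam xbar y \<bullet> h)) (at y))
     \<and> continuous_on UNIV (gradPhi A b v \<beta> lam xbar))
   \<and> (\<forall>yhat. gradPhi A b v \<beta> lam xbar yhat = 0 \<longrightarrow>
        (let uhat = - (1 / \<beta>) *\<^sub>R yhat;
             xhat = soft_thr lam (xbar - lam *\<^sub>R (transpose A *v yhat)) v
         in A *v xhat + uhat = b
            \<and> (\<forall>u x. A *v x + u = b \<longrightarrow>
                 primal_obj v \<beta> lam xbar uhat xhat \<le> primal_obj v \<beta> lam xbar u x)
            \<and> (\<forall>u x. A *v x + u = b \<and>
                 primal_obj v \<beta> lam xbar u x = primal_obj v \<beta> lam xbar uhat xhat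
                 \<longrightarrow> u = uhat \<and> x = xhat)))
   \<and> (\<exists>L. lipschitz_on L UNIV (gradPhi A b v \<beta> lam xbar))
   \<and> strongly_semismooth (gradPhi A b v \<beta> lam xbar)
   \<and> (\<forall>y. clarke_jac (gradPhi A b v \<beta> lam xbar) y \<subseteq>
          {(1 / \<beta>) *\<^sub>R mat 1 + lam *\<^sub>R (A ** D ** transpose A) | D.
             D \<in> clarke_jac (\<lambda>x. soft_thr lam x v) (xbar - lam *\<^sub>R (transpose A *v y))})"
proof -
  let ?F = "gradPhi A b v \<beta> lam xbar"
  obtain L where L: "lipschitz_on L UNIV ?F" using F_lip[OF v_nonneg beta_pos lam_pos] by blast
  have pa: "convex_on UNIV (Phi A b v \<beta> lam xbar)
     \<and> (\<forall>y. (Phi A b v \<beta> lam xbar has_derivative (\<lambda>h. gradPhi A b v \<beta> lam xbar y \<bullet> h)) (at y))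
     \<and> continuous_on UNIV (gradPhi A b v \<beta> lam xbar)"
    using Phi_convex[OF v_nonneg beta_pos lam_pos] Phi_deriv[OF v_nonneg beta_pos lam_pos]
      lipschitz_on_continuous_on[OF L] by blast
  have pb: "\<forall>yhat. gradPhi A b v \<beta> lam xbar yhat = 0 \<longrightarrow>
        (let uhat = - (1 / \<beta>) *\<^sub>R yhat;
             xhat = soft_thr lam (xbar - lam *\<^sub>R (transpose A *v yhat)) v
         in A *v xhat + uhat = b
            \<and> (\<forall>u x. A *v x + u = b \<longrightarrow>
                 primal_obj v \<beta> lam xbar uhat xhat \<le> primal_obj v \<beta> lam xbar u x)
            \<and> (\<forall>u x. A *v x + u = b \<and>
                 primal_obj v \<beta> lam xbar u x = primal_obj v \<beta> lam xbar uhat xhat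
                 \<longrightarrow> u = uhat \<and> x = xhat))"
    using opt_b[OF v_nonneg beta_pos lam_pos] by blast
  have pc: "strongly_semismooth ?F"
    unfolding strongly_semismooth_def using semi_at[OF v_nonneg beta_pos lam_pos] by blast
  have pd: "clarke_jac ?F y \<subseteq>
          {(1 / \<beta>) *\<^sub>R mat 1 + lam *\<^sub>R (A ** D ** transpose A) | D.
             D \<in> clarke_jac (\<lambda>x. soft_thr lam x v) (xbar - lam *\<^sub>R (transpose A *v y))}" for y
    using clarke_sub[OF v_nonneg beta_pos lam_pos, where A=A and b=b and xbar=xbar and y=y]
      T_sub_rhs[OF v_nonneg beta_pos lam_pos, where A=A and z="zf A lam xbar y"]
    unfolding zf_def by blast
  show ?thesis using pa pb pc pd L by blast
qed

end
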